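(* In the setting of the context, for every $x\in\mathbb{R}^d$, every integer $\ell\ge2$ and every $t>0$, $$\limsup_{y\to x}\mathbf{1}_{\{t>\tau_\ell(y)\}}\le\mathbf{1}_{\{t\ge\tau_{\ell-1}(x)\}}\qquad\text{almost surely}.$$
   Context: Let $b:\mathbb{R}^d\to\mathbb{R}^d$ be smooth, $A_1,A_2$ constant $d\times d$ matrices, $W$ a $d$-dimensional Brownian motion and $L$ a $d$-dimensional purely jump Lévy process. For each $\ell\in\mathbb{N}$ let $h_\ell:\mathbb{R}^d\to\mathbb{R}$ be a smooth compactly supported function with $h_\ell(x)=1$ for $|x|\le\ell$, and let $X^\ell_t(x)$ be the solution (driven by the same $W$, $L$ for all $\ell$ and $x$) of $$dX^\ell_t=h_\ell(X^\ell_t)b(X^\ell_t)\,dt+A_1\,dW_t+A_2\,dL_t,\qquad X^\ell_0=x.$$ Define $\tau_\ell(x)=\inf\{s>0:X^\ell_s(x)\notin B_\ell\}$, where $B_\ell=\{u\in\mathbb{R}^d:|u|<\ell\}$. *)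

theory Defs
  imports "HOL-Probability.Probability"
begin

coinductive smooth_map :: "('a::real_normed_vector \<Rightarrow> 'b::real_normed_vector) \<Rightarrow> bool" where
  "\<lbrakk>\<forall>x. f differentiable (at x);
    \<forall>v. smooth_map (\<lambda>x. frechet_derivative f (at x) v)\<rbrakk> \<Longrightarrow> smooth_map f"

definition cadlag :: "(real \<Rightarrow> 'b::topological_space) \<Rightarrow> bool" where
  "cadlag f \<longleftrightarrow> (\<forall>t\<ge>0. continuous (at_right t) f) \<and>
                 (\<forall>t>0. \<exists>l. (f \<longlongrightarrow> l) (at_left t))"

definition indep_increments ::
  "'w measure \<Rightarrow> (real \<Rightarrow> 'w \<Rightarrow> real^'d) \<Rightarrow> bool" where
  "indep_increments M Z \<longleftrightarrow>
     (\<forall>(n::nat) (ts::nat \<Rightarrow> real). 0 \<le> ts 0 \<and> (\<forall>i<n. ts i < ts (Suc i)) \<longrightarrow>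
        prob_space.indep_vars M (\<lambda>_. borel) (\<lambda>i \<omega>. Z (ts (Suc i)) \<omega> - Z (ts i) \<omega>) {..<n})"

text \<open>Standard d-dimensional Brownian motion (increments W_t - W_s are
  N(0,(t-s)I), characterised by their characteristic function).\<close>
definition brownian_motion :: "'w measure \<Rightarrow> (real \<Rightarrow> 'w \<Rightarrow> real^'d) \<Rightarrow> bool" where
  "brownian_motion M W \<longleftrightarrow>
     prob_space M \<and> (\<forall>t. W t \<in> borel_measurable M) \<and>
     (\<forall>\<omega>\<in>space M. W 0 \<omega> = 0 \<and> continuous_on {0..} (\<lambda>t. W t \<omega>)) \<and>
     indep_increments M W \<and>
     (\<forall>s t u. 0 \<le> s \<longrightarrow> s \<le> t \<longrightarrow>
        (LINT \<omega>|M. cis (u \<bullet> (W t \<omega> - W s \<omega>))) = complex_of_real (exp (- (t - s) * (norm u)\<^sup>2 / 2)))"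

definition levy_measure :: "(real^'d) measure \<Rightarrow> bool" where
  "levy_measure \<nu> \<longleftrightarrow> sets \<nu> = sets borel \<and> emeasure \<nu> {0} = 0 \<and>
     (\<integral>\<^sup>+ z. ennreal (min 1 ((norm z)\<^sup>2)) \<partial>\<nu>) < \<infinity>"

definition levy_process :: "'w measure \<Rightarrow> (real \<Rightarrow> 'w \<Rightarrow> real^'d) \<Rightarrow> bool" where
  "levy_process M L \<longleftrightarrow>
     prob_space M \<and> (\<forall>t. L t \<in> borel_measurable M) \<and>
     (\<forall>\<omega>\<in>space M. L 0 \<omega> = 0 \<and> cadlag (\<lambda>t. L t \<omega>)) \<and>
     indep_increments M L \<and>
     (\<forall>s t. 0 \<le> s \<longrightarrow> s \<le> t \<longrightarrow>
        distr M borel (\<lambda>\<omega>. L t \<omega> - L s \<omega>) = distr M borel (L (t - s))) \<and>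
     (\<forall>t\<ge>0. \<forall>e>0. ((\<lambda>s. measure M {\<omega>\<in>space M. norm (L s \<omega> - L t \<omega>) > e}) \<longlongrightarrow> 0)
                    (at t within {0..}))"

text \<open>Purely jump Levy process: Levy-Khintchine triplet with zero Gaussian part.\<close>
definition pure_jump_levy_process :: "'w measure \<Rightarrow> (real \<Rightarrow> 'w \<Rightarrow> real^'d) \<Rightarrow> bool" where
  "pure_jump_levy_process M L \<longleftrightarrow> levy_process M L \<and>
     (\<exists>(\<gamma>::real^'d) \<nu>. levy_measure \<nu> \<and>
        (\<forall>t\<ge>0. \<forall>u. (LINT \<omega>|M. cis (u \<bullet> L t \<omega>)) =
           exp (complex_of_real t * (\<i> * complex_of_real (\<gamma> \<bullet> u) +
             (LINT z|\<nu>. cis (u \<bullet> z) - 1 - \<i> * complex_of_real (u \<bullet> z) * indicator (ball 0 1) z)))))"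

text \<open>Exit time inf{s>0 : p s \<notin> B_r}, with inf of the empty set = +infinity.\<close>
definition exit_time :: "(real \<Rightarrow> real^'d) \<Rightarrow> real \<Rightarrow> ereal" where
  "exit_time p r = Inf {ereal s | s. 0 < s \<and> p s \<notin> ball 0 r}"

end

theory Submission
  imports Defs
begin

lemma smooth_facts:
  assumes "smooth_map f"
  shows "(f has_derivative frechet_derivative f (at x)) (at x)"
    and "continuous_on UNIV f"
    and "continuous_on UNIV (\<lambda>x. frechet_derivative f (at x) v)"
proof -
  from assms have d: "\<forall>x. f differentiable (at x)"
    and s: "\<forall>v. smooth_map (\<lambda>x. frechet_derivative f (at x) v)"
    by (auto elim: smooth_map.cases)
  show "(f has_derivative frechet_derivative f (at x)) (at x)"
    using d frechet_derivative_works by blast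
  show "continuous_on UNIV f"
    using d by (simp add: continuous_at_imp_continuous_on differentiable_imp_continuous_within)
  from s[rule_format, of v] have "\<forall>x. (\<lambda>x. frechet_derivative f (at x) v) differentiable (at x)"
    by (auto elim: smooth_map.cases)
  then show "continuous_on UNIV (\<lambda>x. frechet_derivative f (at x) v)"
    by (simp add: continuous_at_imp_continuous_on differentiable_imp_continuous_within)
qed

lemma cont_bounded_on_compact:
  fixes g :: "'a::metric_space \<Rightarrow> 'b::real_normed_vector"
  assumes "continuous_on UNIV g" "compact S"
  shows "\<exists>B\<ge>0. \<forall>x\<in>S. norm (g x) \<le> B"
proof -
  have "compact (g ` S)"
    using assms by (meson compact_continuous_image continuous_on_subset top_greatest)
  then obtain B where "B > 0" "\<forall>y\<in>g ` S. norm y \<le> B"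
    using compact_imp_bounded bounded_pos by metis
  then show ?thesis by (intro exI[of _ B]) auto
qed

lemma smooth_deriv_bound:
  fixes f :: "'a::euclidean_space \<Rightarrow> 'b::real_normed_vector"
  assumes "smooth_map f" "compact S"
  shows "\<exists>B\<ge>0. \<forall>x\<in>S. \<forall>v. norm (frechet_derivative f (at x) v) \<le> B * norm v"
proof -
  have "\<forall>i\<in>Basis. \<exists>B\<ge>0. \<forall>x\<in>S. norm (frechet_derivative f (at x) i) \<le> B"
    using cont_bounded_on_compact[OF smooth_facts(3)[OF assms(1)] assms(2)] by blast
  then obtain Bf where Bf: "\<And>i. i \<in> Basis \<Longrightarrow> Bf i \<ge> 0 \<and> (\<forall>x\<in>S. norm (frechet_derivative f (at x) i) \<le> Bf i)"
    by metis
  define B where "B = (\<Sum>i\<in>Basis. Bf i)"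
  have "B \<ge> 0" unfolding B_def using Bf by (simp add: sum_nonneg)
  moreover have "norm (frechet_derivative f (at x) v) \<le> B * norm v" if x: "x \<in> S" for x v
  proof -
    let ?D = "frechet_derivative f (at x)"
    have lin: "linear ?D"
      using smooth_facts(1)[OF assms(1), of x] has_derivative_linear by blast
    have "?D v = ?D (\<Sum>i\<in>Basis. (v \<bullet> i) *\<^sub>R i)" by (simp add: euclidean_representation)
    also have "\<dots> = (\<Sum>i\<in>Basis. (v \<bullet> i) *\<^sub>R ?D i)"
      using lin by (simp add: linear_sum linear_scale o_def)
    finally have "norm (?D v) \<le> (\<Sum>i\<in>Basis. norm ((v \<bullet> i) *\<^sub>R ?D i))"
      using norm_sum by metis
    also have "\<dots> \<le> (\<Sum>i\<in>Basis. norm v * Bf i)"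
    proof (rule sum_mono)
      fix i :: 'a assume i: "i \<in> Basis"
      have "norm ((v \<bullet> i) *\<^sub>R ?D i) = \<bar>v \<bullet> i\<bar> * norm (?D i)" by simp
      also have "\<dots> \<le> norm v * Bf i"
        using Bf[OF i] x Basis_le_norm[OF i, of v] by (intro mult_mono) auto
      finally show "norm ((v \<bullet> i) *\<^sub>R ?D i) \<le> norm v * Bf i" .
    qed
    also have "\<dots> = B * norm v" unfolding B_def by (simp add: sum_distrib_left mult.commute)
    finally show ?thesis .
  qed
  ultimately show ?thesis by blast
qed

lemma lipschitz_prod:
  fixes h :: "'a::euclidean_space \<Rightarrow> real" and b :: "'a \<Rightarrow> 'b::real_normed_vector"
  assumes hs: "smooth_map h" and bs: "smooth_map b" and hb: "bounded {z. h z \<noteq> 0}"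
  shows "\<exists>K>0. \<forall>a c. norm (h a *\<^sub>R b a - h c *\<^sub>R b c) \<le> K * norm (a - c)"
proof -
  obtain R where R: "R > 0" "{z. h z \<noteq> 0} \<subseteq> ball 0 R"
    using bounded_subset_ballD[OF hb] by blast
  have cS: "compact (cball (0::'a) R)" by simp
  obtain Bh where Bh: "Bh \<ge> 0" "\<forall>x\<in>cball 0 R. \<forall>v. norm (frechet_derivative h (at x) v) \<le> Bh * norm v"
    using smooth_deriv_bound[OF hs cS] by blast
  obtain Bb where Bb: "Bb \<ge> 0" "\<forall>x\<in>cball 0 R. \<forall>v. norm (frechet_derivative b (at x) v) \<le> Bb * norm v"
    using smooth_deriv_bound[OF bs cS] by blast
  obtain Mh where Mh: "Mh \<ge> 0" "\<forall>x\<in>cball 0 R. norm (h x) \<le> Mh"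
    using cont_bounded_on_compact[OF smooth_facts(2)[OF hs] cS] by blast
  obtain Mb where Mb: "Mb \<ge> 0" "\<forall>x\<in>cball 0 R. norm (b x) \<le> Mb"
    using cont_bounded_on_compact[OF smooth_facts(2)[OF bs] cS] by blast
  define f' where "f' = (\<lambda>x. if norm x \<le> R then (\<lambda>v. h x *\<^sub>R frechet_derivative b (at x) v + frechet_derivative h (at x) v *\<^sub>R b x) else (\<lambda>v. 0))"
  define K where "K = Bh * Mb + Mh * Bb + 1"
  have der: "((\<lambda>z. h z *\<^sub>R b z) has_derivative f' x) (at x within UNIV)" for x
  proof (cases "norm x \<le> R")
    case True
    then show ?thesis unfolding f'_def
      using has_derivative_scaleR[OF smooth_facts(1)[OF hs, of x] smooth_facts(1)[OF bs, of x]] by simp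
  next
    case False
    have "((\<lambda>z. 0) has_derivative (\<lambda>v. 0)) (at x within UNIV)" by simp
    then have "((\<lambda>z. h z *\<^sub>R b z) has_derivative (\<lambda>v. 0)) (at x within UNIV)"
    proof (rule has_derivative_transform_within_open[where s = "{z. R < norm z}"])
      show "open {z::'a. R < norm z}" by (simp add: open_Collect_less continuous_on_norm_id)
      show "x \<in> {z. R < norm z}" using False by simp
      fix z :: 'a assume "z \<in> {z. R < norm z}"
      then have "h z = 0" using R(2) by force
      then show "0 = h z *\<^sub>R b z" by simp
    qed
    then show ?thesis using False unfolding f'_def by simp
  qed
  have onb: "onorm (f' x) \<le> K" for x
  proof -
    have "norm (f' x v) \<le> K * norm v" for v
    proof (cases "norm x \<le> R")
      case True
      then have xS: "x \<in> cball 0 R" by simp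
      have "norm (f' x v) \<le> norm (h x *\<^sub>R frechet_derivative b (at x) v) + norm (frechet_derivative h (at x) v *\<^sub>R b x)"
        using True unfolding f'_def by (simp only: if_True norm_triangle_ineq)
      also have "\<dots> = norm (h x) * norm (frechet_derivative b (at x) v) + norm (frechet_derivative h (at x) v) * norm (b x)"
        by simp
      also have "\<dots> \<le> Mh * (Bb * norm v) + (Bh * norm v) * Mb"
        using Bh Bb Mh Mb xS by (intro add_mono mult_mono) auto
      also have "\<dots> \<le> K * norm v" unfolding K_def by (simp add: algebra_simps)
      finally show ?thesis .
    next
      case False
      then show ?thesis unfolding f'_def K_def using Bh Bb Mh Mb by simp
    qed
    then show ?thesis by (rule onorm_le)
  qed
  have "norm (h a *\<^sub>R b a - h c *\<^sub>R b c) \<le> K * norm (a - c)" for a c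
    by (rule differentiable_bound[OF convex_UNIV der onb]) auto
  moreover have "K > 0" unfolding K_def using Bh Bb Mh Mb by (simp add: add_nonneg_pos)
  ultimately show ?thesis by blast
qed
lemma gronwall:
  fixes u :: "real \<Rightarrow> real" and c K T :: real
  assumes cont: "continuous_on {0..T} u" and K: "K > 0" and c: "c \<ge> 0"
    and bnd: "\<And>s. s \<in> {0..T} \<Longrightarrow> u s \<le> c + K * integral {0..s} u"
    and s: "s \<in> {0..T}"
  shows "u s \<le> c * exp (K * s)"
proof -
  define g where "g = (\<lambda>s. integral {0..s} u)"
  define \<phi> where "\<phi> = (\<lambda>s. exp (- K * s) * (g s + c / K))"
  have gd: "(g has_real_derivative u x) (at x within {0..T})" if "x \<in> {0..T}" for x
    unfolding g_def using integral_has_real_derivative[OF cont that] .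
  have gc: "continuous_on {0..T} g"
    unfolding g_def by (rule indefinite_integral_continuous_1[OF integrable_continuous_real[OF cont]])
  have "\<phi> 0 \<ge> \<phi> s"
  proof (rule DERIV_nonpos_imp_decreasing_open[of 0 s \<phi>])
    show "0 \<le> s" using s by auto
    show "continuous_on {0..s} \<phi>" unfolding \<phi>_def
      by (intro continuous_intros continuous_on_subset[OF gc]) (use s in auto)
    fix x assume x: "0 < x" "x < s"
    have xT: "x \<in> {0..T}" using x s by auto
    have "(g has_real_derivative u x) (at x)"
      using gd[OF xT] at_within_Icc_at[of 0 x T] x s by auto
    then have "(\<phi> has_real_derivative (exp (- K * x) * (- K) * (g x + c / K) + exp (- K * x) * u x)) (at x)"
      unfolding \<phi>_def by (auto intro!: derivative_eq_intros)
    moreover have "exp (- K * x) * (- K) * (g x + c / K) + exp (- K * x) * u x \<le> 0"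
    proof -
      have "u x \<le> c + K * g x" using bnd[OF xT] unfolding g_def .
      moreover have "(- K) * (g x + c / K) = - K * g x - c" using K by (simp add: field_simps)
      ultimately have "(- K) * (g x + c / K) + u x \<le> 0" by linarith
      then have "exp (- K * x) * ((- K) * (g x + c / K) + u x) \<le> 0"
        by (simp add: mult_nonneg_nonpos)
      then show ?thesis by (simp only: distrib_left mult.assoc)
    qed
    ultimately show "\<exists>y. (\<phi> has_real_derivative y) (at x) \<and> y \<le> 0" by blast
  qed
  then have "exp (- K * s) * (g s + c / K) \<le> c / K" unfolding \<phi>_def g_def by simp
  then have "g s + c / K \<le> c / K * exp (K * s)"
    by (simp add: exp_minus field_simps)
  then have "K * (g s + c / K) \<le> K * (c / K * exp (K * s))"
    using K by (intro mult_left_mono) auto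
  then have "c + K * g s \<le> c * exp (K * s)" using K by (simp add: distrib_left)
  then show ?thesis using bnd[OF s] unfolding g_def by simp
qed

lemma exit_lt:
  assumes "ereal t < exit_time p r" "0 < s" "s \<le> t"
  shows "p s \<in> ball 0 r"
proof (rule ccontr)
  assume "p s \<notin> ball 0 r"
  then have "ereal s \<in> {ereal s | s. 0 < s \<and> p s \<notin> ball 0 r}" using assms by blast
  then have "exit_time p r \<le> ereal s" unfolding exit_time_def by (rule Inf_lower)
  moreover have "ereal s \<le> ereal t" using assms by simp
  ultimately show False using assms(1) by (meson order_trans leD)
qed

lemma exit_ge:
  assumes "\<And>s. 0 < s \<Longrightarrow> s \<le> t \<Longrightarrow> p s \<in> ball 0 r"
  shows "ereal t \<le> exit_time p r"
  unfolding exit_time_def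
proof (rule Inf_greatest)
  fix z assume "z \<in> {ereal s | s. 0 < s \<and> p s \<notin> ball 0 r}"
  then obtain s where "z = ereal s" "0 < s" "p s \<notin> ball 0 r" by blast
  then show "ereal t \<le> z" using assms by (cases "s \<le> t") auto
qed

theorem lemma4p2:
  fixes M :: "'w measure"
    and b :: "real^'d \<Rightarrow> real^'d"
    and A1 A2 :: "real^'d^'d"
    and W L :: "real \<Rightarrow> 'w \<Rightarrow> real^'d"
    and h :: "nat \<Rightarrow> real^'d \<Rightarrow> real"
    and X :: "nat \<Rightarrow> real^'d \<Rightarrow> real \<Rightarrow> 'w \<Rightarrow> real^'d"
    and x :: "real^'d" and l :: nat and t :: real
  assumes b_smooth: "smooth_map b"
    and W_bm: "brownian_motion M W"
    and L_levy: "pure_jump_levy_process M L"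
    and h_smooth: "\<And>k. k \<ge> 1 \<Longrightarrow> smooth_map (h k)"
    and h_supp: "\<And>k. k \<ge> 1 \<Longrightarrow> bounded {z. h k z \<noteq> 0}"
    and h_one: "\<And>k z. k \<ge> 1 \<Longrightarrow> norm z \<le> real k \<Longrightarrow> h k z = 1"
    and X_sol: "\<And>k y \<omega> s. k \<ge> 1 \<Longrightarrow> \<omega> \<in> space M \<Longrightarrow> 0 \<le> s \<Longrightarrow>
        ((\<lambda>r. h k (X k y r \<omega>) *\<^sub>R b (X k y r \<omega>)) has_integral
           (X k y s \<omega> - y - A1 *v W s \<omega> - A2 *v L s \<omega>)) {0..s}"
    and l2: "l \<ge> 2"
    and tpos: "t > 0"
  shows "AE \<omega> in M.
     Limsup (at x) (\<lambda>y. if ereal t > exit_time (\<lambda>s. X l y s \<omega>) (real l) then 1 else (0::ereal))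
       \<le> (if ereal t \<ge> exit_time (\<lambda>s. X (l - 1) x s \<omega>) (real (l - 1)) then 1 else 0)"
  
proof (rule AE_I2)
  fix \<omega> assume \<omega>: "\<omega> \<in> space M"
  let ?P = "\<lambda>y. if ereal t > exit_time (\<lambda>s. X l y s \<omega>) (real l) then 1 else (0::ereal)"
  show "Limsup (at x) ?P
       \<le> (if ereal t \<ge> exit_time (\<lambda>s. X (l - 1) x s \<omega>) (real (l - 1)) then 1 else 0)"
  proof (cases "ereal t \<ge> exit_time (\<lambda>s. X (l - 1) x s \<omega>) (real (l - 1))")
    case True
    have "Limsup (at x) ?P \<le> 1" by (rule Limsup_bounded) auto
    then show ?thesis using True by simp
  next
    case False
    then have lt: "ereal t < exit_time (\<lambda>s. X (l - 1) x s \<omega>) (real (l - 1))" by simp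
    have inb: "X (l - 1) x s \<omega> \<in> ball 0 (real (l - 1))" if "0 < s" "s \<le> t" for s
      using exit_lt[OF lt that] .
    have l1: "l \<ge> 1" "l - 1 \<ge> 1" using l2 by auto
    obtain K where K: "K > 0" "\<And>a c. norm (h l a *\<^sub>R b a - h l c *\<^sub>R b c) \<le> K * norm (a - c)"
      using lipschitz_prod[OF h_smooth[OF l1(1)] b_smooth h_supp[OF l1(1)]] by blast
    have key: "norm (X l y s \<omega> - X (l - 1) x s \<omega>) \<le> norm (y - x) * exp (K * s)"
      if s: "s \<in> {0..t}" for y s
    proof -
      define Fl where "Fl = (\<lambda>r. h l (X l y r \<omega>) *\<^sub>R b (X l y r \<omega>))"
      define Fm where "Fm = (\<lambda>r. h (l - 1) (X (l - 1) x r \<omega>) *\<^sub>R b (X (l - 1) x r \<omega>))"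
      define Fd where "Fd = (\<lambda>r. Fl r - Fm r)"
      define D where "D = (\<lambda>s. X l y s \<omega> - X (l - 1) x s \<omega>)"
      define G where "G = (\<lambda>r. if r = 0 then 0 else Fd r)"
      define u where "u = (\<lambda>s. norm (D s))"
      have hasd: "(Fd has_integral (D s - (y - x))) {0..s}" if "0 \<le> s" for s
      proof -
        have "(Fd has_integral ((X l y s \<omega> - y - A1 *v W s \<omega> - A2 *v L s \<omega>)
              - (X (l - 1) x s \<omega> - x - A1 *v W s \<omega> - A2 *v L s \<omega>))) {0..s}"
          unfolding Fd_def Fl_def Fm_def
          by (rule has_integral_diff[OF X_sol[OF l1(1) \<omega> that] X_sol[OF l1(2) \<omega> that]])
        moreover have "(X l y s \<omega> - y - A1 *v W s \<omega> - A2 *v L s \<omega>)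
              - (X (l - 1) x s \<omega> - x - A1 *v W s \<omega> - A2 *v L s \<omega>) = D s - (y - x)"
          unfolding D_def by (simp add: algebra_simps)
        ultimately show ?thesis by (simp only:)
      qed
      have Deq: "D s = (y - x) + integral {0..s} Fd" if "0 \<le> s" for s
        using integral_unique[OF hasd[OF that]] by simp
      have Fdi: "Fd integrable_on {0..t}" using hasd[of t] tpos unfolding integrable_on_def by auto
      have Dc: "continuous_on {0..t} D"
      proof -
        have "continuous_on {0..t} (\<lambda>s. (y - x) + integral {0..s} Fd)"
          by (intro continuous_intros indefinite_integral_continuous_1[OF Fdi])
        then show ?thesis by (rule continuous_on_eq) (use Deq in auto)
      qed
      have uc: "continuous_on {0..t} u" unfolding u_def by (intro continuous_intros Dc)
      have bnd: "u s \<le> norm (y - x) + K * integral {0..s} u" if s: "s \<in> {0..t}" for s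
      proof -
        have sub: "{0..s} \<subseteq> {0..t}" using s by auto
        have Fds: "Fd integrable_on {0..s}" using hasd[of s] s unfolding integrable_on_def by auto
        have Gs: "G integrable_on {0..s}"
          by (rule integrable_spike[OF Fds negligible_sing[of 0]]) (auto simp: G_def)
        have GF: "integral {0..s} Fd = integral {0..s} G"
          by (rule integral_spike[OF negligible_sing[of 0]]) (auto simp: G_def)
        have us: "(\<lambda>r. K * u r) integrable_on {0..s}"
          by (intro integrable_continuous_real continuous_intros continuous_on_subset[OF uc sub])
        have ptw: "norm (G r) \<le> K * u r" if r: "r \<in> {0..s}" for r
        proof (cases "r = 0")
          case True then show ?thesis using K by (simp add: G_def u_def)
        next
          case False
          then have r0: "0 < r" "r \<le> t" using r s by auto
          have nb: "norm (X (l - 1) x r \<omega>) < real (l - 1)" using inb[OF r0] by simp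
          have "h (l - 1) (X (l - 1) x r \<omega>) = 1" using h_one[OF l1(2)] nb by simp
          moreover have "h l (X (l - 1) x r \<omega>) = 1" using h_one[OF l1(1)] nb l1 by simp
          ultimately have "Fm r = h l (X (l - 1) x r \<omega>) *\<^sub>R b (X (l - 1) x r \<omega>)"
            unfolding Fm_def by simp
          then have "G r = h l (X l y r \<omega>) *\<^sub>R b (X l y r \<omega>) - h l (X (l - 1) x r \<omega>) *\<^sub>R b (X (l - 1) x r \<omega>)"
            using False unfolding G_def Fd_def Fl_def by simp
          then show ?thesis using K(2) unfolding u_def D_def by simp
        qed
        have "u s = norm ((y - x) + integral {0..s} G)" unfolding u_def using Deq[of s] s GF by simp
        also have "\<dots> \<le> norm (y - x) + norm (integral {0..s} G)" by (rule norm_triangle_ineq)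
        also have "norm (integral {0..s} G) \<le> integral {0..s} (\<lambda>r. K * u r)"
          by (rule integral_norm_bound_integral[OF Gs us ptw])
        also have "integral {0..s} (\<lambda>r. K * u r) = K * integral {0..s} u" by simp
        finally show ?thesis by simp
      qed
      have "u s \<le> norm (y - x) * exp (K * s)"
        by (rule gronwall[OF uc K(1) norm_ge_zero bnd s])
      then show ?thesis unfolding u_def D_def .
    qed
    have ev: "eventually (\<lambda>y. ?P y \<le> 0) (at x)"
      unfolding eventually_at
    proof (intro exI[of _ "exp (- K * t)"] conjI ballI impI)
      show "0 < exp (- K * t)" by simp
      fix y assume y: "y \<noteq> x \<and> dist y x < exp (- K * t)"
      have inl: "X l y s \<omega> \<in> ball 0 (real l)" if "0 < s" "s \<le> t" for s
      proof -
        have k: "norm (X l y s \<omega> - X (l - 1) x s \<omega>) \<le> norm (y - x) * exp (K * s)"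
          using key[of s y] that by auto
        have "norm (y - x) * exp (K * s) \<le> norm (y - x) * exp (K * t)"
          using that K by (intro mult_left_mono) auto
        also have "\<dots> < exp (- K * t) * exp (K * t)"
          using y by (intro mult_strict_right_mono) (auto simp: dist_norm)
        also have "\<dots> = 1" by (simp add: exp_minus field_simps)
        finally have "norm (X l y s \<omega> - X (l - 1) x s \<omega>) < 1" using k by simp
        moreover have "norm (X (l - 1) x s \<omega>) < real (l - 1)" using inb[OF that] by simp
        moreover have "norm (X l y s \<omega>) \<le> norm (X (l - 1) x s \<omega>) + norm (X l y s \<omega> - X (l - 1) x s \<omega>)"
          by (metis norm_triangle_ineq add.commute diff_add_cancel)
        moreover have "real (l - 1) + 1 = real l" using l1 by simp
        ultimately show ?thesis by simp
      qed
      have "ereal t \<le> exit_time (\<lambda>s. X l y s \<omega>) (real l)"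
        by (rule exit_ge) (use inl in auto)
      then show "?P y \<le> 0" by simp
    qed
    have "Limsup (at x) ?P \<le> 0" by (rule Limsup_bounded[OF ev])
    then show ?thesis using False by simp
  qed
qed

end
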